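(* Let $N$ be a continuous fuzzy negation, $U$ a disjunctive uninorm with neutral element $e\in\,]0,1[$, and $I(x,y)=U(N(x),y)$ for $x,y\in[0,1]$. Then the representation of $I$ as a $(U,N)$-implication with a continuous fuzzy negation is not unique if and only if there exists $\alpha\in\,]0,1[$ with $\alpha\neq e$ such that the function $f=U(\cdot,\alpha)$ is continuous and non-decreasing with $f(0)=0$ and $f(1)=1$.
   Context: A fuzzy negation is a non-increasing map $N:[0,1]\to[0,1]$ with $N(0)=1$, $N(1)=0$. A uninorm is a map $U:[0,1]^2\to[0,1]$ that is commutative, associative, non-decreasing in each variable, and has a neutral element $e\in[0,1]$. A uninorm is disjunctive if $U(1,0)=1$. A representation of $I$ as a $(U,N)$-implication with a continuous fuzzy negation is a pair $(U',N')$ with $U'$ a disjunctive uninorm with neutral element in $]0,1[$ and $N'$ a continuous fuzzy negation such that $I(x,y)=U'(N'(x),y)$ for all $x,y\in[0,1]$; the representation is unique if $(U,N)$ is the only such pair. *)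

theory Defs
  imports Complex_Main
begin

(* All maps are modelled as real functions; only their values on [0,1] matter. *)

definition fuzzy_negation :: "(real \<Rightarrow> real) \<Rightarrow> bool" where
  "fuzzy_negation N \<longleftrightarrow>
     (\<forall>x\<in>{0..1}. N x \<in> {0..1}) \<and>
     (\<forall>x\<in>{0..1}. \<forall>y\<in>{0..1}. x \<le> y \<longrightarrow> N y \<le> N x) \<and>
     N 0 = 1 \<and> N 1 = 0"

definition uninorm :: "(real \<Rightarrow> real \<Rightarrow> real) \<Rightarrow> real \<Rightarrow> bool" where
  "uninorm U e \<longleftrightarrow>
     e \<in> {0..1} \<and>
     (\<forall>x\<in>{0..1}. \<forall>y\<in>{0..1}. U x y \<in> {0..1}) \<and>
     (\<forall>x\<in>{0..1}. \<forall>y\<in>{0..1}. U x y = U y x) \<and>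
     (\<forall>x\<in>{0..1}. \<forall>y\<in>{0..1}. \<forall>z\<in>{0..1}. U (U x y) z = U x (U y z)) \<and>
     (\<forall>x\<in>{0..1}. \<forall>x'\<in>{0..1}. \<forall>y\<in>{0..1}. x \<le> x' \<longrightarrow> U x y \<le> U x' y) \<and>
     (\<forall>x\<in>{0..1}. U e x = x)"

definition disjunctive :: "(real \<Rightarrow> real \<Rightarrow> real) \<Rightarrow> bool" where
  "disjunctive U \<longleftrightarrow> U 1 0 = 1"

definition UN_representation ::
  "(real \<Rightarrow> real \<Rightarrow> real) \<Rightarrow> (real \<Rightarrow> real \<Rightarrow> real) \<Rightarrow> (real \<Rightarrow> real) \<Rightarrow> bool" where
  "UN_representation I U N \<longleftrightarrow>
     (\<exists>e\<in>{0<..<1}. uninorm U e) \<and> disjunctive U \<and>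
     fuzzy_negation N \<and> continuous_on {0..1} N \<and>
     (\<forall>x\<in>{0..1}. \<forall>y\<in>{0..1}. I x y = U (N x) y)"

definition unique_UN_representation ::
  "(real \<Rightarrow> real \<Rightarrow> real) \<Rightarrow> (real \<Rightarrow> real \<Rightarrow> real) \<Rightarrow> (real \<Rightarrow> real) \<Rightarrow> bool" where
  "unique_UN_representation I U N \<longleftrightarrow>
     UN_representation I U N \<and>
     (\<forall>U' N'. UN_representation I U' N' \<longrightarrow>
        (\<forall>x\<in>{0..1}. \<forall>y\<in>{0..1}. U' x y = U x y) \<and> (\<forall>x\<in>{0..1}. N' x = N x))"

end

theory Submission
  imports Defs
begin

lemma mono_onto_cont:
  fixes f :: "real \<Rightarrow> real"
  assumes mono: "\<And>x y. x \<in> {0..1} \<Longrightarrow> y \<in> {0..1} \<Longrightarrow> x \<le> y \<Longrightarrow> f x \<le> f y"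
    and onto: "\<And>z. z \<in> {0..1} \<Longrightarrow> \<exists>x\<in>{0..1}. f x = z"
    and f0: "f 0 = 0" and f1: "f 1 = 1"
  shows "continuous_on {0..1} f"
proof -
  define g where "g x = (if x < 0 then x else if x > 1 then x else f x)" for x
  have gm: "g x \<le> g y" if "x \<le> y" for x y
  proof -
    have a: "f x \<ge> 0" if "x \<in> {0..1}" for x using mono[of 0 x] that f0 by auto
    have b: "f x \<le> 1" if "x \<in> {0..1}" for x using mono[of x 1] that f1 by auto
    show ?thesis using \<open>x \<le> y\<close> a[of x] a[of y] b[of x] b[of y] mono[of x y]
      unfolding g_def by auto
  qed
  have "g ` UNIV = UNIV"
  proof safe
    fix z :: real
    show "z \<in> range g"
    proof (cases "z \<in> {0..1}")
      case True
      then obtain x where "x \<in> {0..1}" "f x = z" using onto by blast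
      then show ?thesis unfolding g_def by (intro image_eqI[of _ _ x]) auto
    next
      case False
      then show ?thesis unfolding g_def by (intro image_eqI[of _ _ z]) auto
    qed
  qed simp
  then have "continuous_on UNIV g"
    by (intro continuous_onI_mono) (auto intro: gm)
  then have "continuous_on {0..1} g" by (rule continuous_on_subset) auto
  moreover have "\<And>x. x \<in> {0..1} \<Longrightarrow> g x = f x" unfolding g_def by auto
  ultimately show ?thesis using continuous_on_cong by (metis (no_types, lifting))
qed

lemma neg_onto:
  fixes N :: "real \<Rightarrow> real"
  assumes "fuzzy_negation N" "continuous_on {0..1} N" "z \<in> {0..1}"
  shows "\<exists>x\<in>{0..1}. N x = z"
proof -
  have "N 0 = 1" "N 1 = 0" using assms(1) unfolding fuzzy_negation_def by auto
  then show ?thesis using IVT2'[of N 1 z 0] assms(2,3) by auto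
qed

theorem mainTheorem4:
  fixes N :: "real \<Rightarrow> real" and U :: "real \<Rightarrow> real \<Rightarrow> real" and e :: real
    and I :: "real \<Rightarrow> real \<Rightarrow> real"
  assumes "fuzzy_negation N" and "continuous_on {0..1} N"
    and "uninorm U e" and "disjunctive U" and "e \<in> {0<..<1}"
    and "\<forall>x\<in>{0..1}. \<forall>y\<in>{0..1}. I x y = U (N x) y"
  shows "\<not> unique_UN_representation I U N \<longleftrightarrow>
    (\<exists>\<alpha>\<in>{0<..<1}. \<alpha> \<noteq> e \<and>
       continuous_on {0..1} (\<lambda>x. U x \<alpha>) \<and> mono_on {0..1} (\<lambda>x. U x \<alpha>) \<and>
       U 0 \<alpha> = 0 \<and> U 1 \<alpha> = 1)"
proof -
  note U = assms(3)[unfolded uninorm_def]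
  have Ur: "\<And>x y. x \<in> {0..1} \<Longrightarrow> y \<in> {0..1} \<Longrightarrow> U x y \<in> {0..1}" using U by blast
  have Uc: "\<And>x y. x \<in> {0..1} \<Longrightarrow> y \<in> {0..1} \<Longrightarrow> U x y = U y x" using U by blast
  have Ua: "\<And>x y z. x \<in> {0..1} \<Longrightarrow> y \<in> {0..1} \<Longrightarrow> z \<in> {0..1} \<Longrightarrow> U (U x y) z = U x (U y z)"
    using U by blast
  have Um: "\<And>x x' y. x \<in> {0..1} \<Longrightarrow> x' \<in> {0..1} \<Longrightarrow> y \<in> {0..1} \<Longrightarrow> x \<le> x' \<Longrightarrow> U x y \<le> U x' y"
    using U by blast
  have Ue: "\<And>x. x \<in> {0..1} \<Longrightarrow> U e x = x" using U by blast
  have Ue2: "\<And>x. x \<in> {0..1} \<Longrightarrow> U x e = x" using Ue Uc assms(5) by auto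
  have e01: "e \<in> {0..1}" using assms(5) by auto
  note Nf = assms(1)[unfolded fuzzy_negation_def]
  have Nr: "\<And>x. x \<in> {0..1} \<Longrightarrow> N x \<in> {0..1}" using Nf by blast
  have rep: "UN_representation I U N"
    unfolding UN_representation_def using assms by blast
  show ?thesis
  proof
    assume "\<not> unique_UN_representation I U N"
    then obtain U' N' where rep': "UN_representation I U' N'" and
      diff: "\<not> ((\<forall>x\<in>{0..1}. \<forall>y\<in>{0..1}. U' x y = U x y) \<and> (\<forall>x\<in>{0..1}. N' x = N x))"
      using rep unfolding unique_UN_representation_def by blast
    then obtain e' where e': "e' \<in> {0<..<1}" "uninorm U' e'" and N'f: "fuzzy_negation N'"
      and N'c: "continuous_on {0..1} N'"
      and I': "\<forall>x\<in>{0..1}. \<forall>y\<in>{0..1}. I x y = U' (N' x) y"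
      unfolding UN_representation_def by blast
    note U' = e'(2)[unfolded uninorm_def]
    have Uc': "\<And>x y. x \<in> {0..1} \<Longrightarrow> y \<in> {0..1} \<Longrightarrow> U' x y = U' y x" using U' by blast
    have Ue': "\<And>x. x \<in> {0..1} \<Longrightarrow> U' e' x = x" using U' by blast
    have Ue2': "\<And>x. x \<in> {0..1} \<Longrightarrow> U' x e' = x" using Ue' Uc' e'(1) by auto
    have N'r: "\<And>x. x \<in> {0..1} \<Longrightarrow> N' x \<in> {0..1}" using N'f unfolding fuzzy_negation_def by blast
    have eq: "\<And>x y. x \<in> {0..1} \<Longrightarrow> y \<in> {0..1} \<Longrightarrow> U (N x) y = U' (N' x) y"
      using assms(6) I' by auto
    have key: "\<And>x. x \<in> {0..1} \<Longrightarrow> U (N x) e' = N' x"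
      using eq e'(1) Ue2' N'r by fastforce
    have e'01: "e' \<in> {0..1}" using e'(1) by auto
    have "e' \<noteq> e"
    proof
      assume "e' = e"
      then have NN: "\<And>x. x \<in> {0..1} \<Longrightarrow> N' x = N x" using key Ue2 Nr by metis
      have "\<forall>a\<in>{0..1}. \<forall>y\<in>{0..1}. U' a y = U a y"
      proof (intro ballI)
        fix a y :: real assume "a \<in> {0..1}" "y \<in> {0..1}"
        then obtain x where "x \<in> {0..1}" "N x = a" using neg_onto[OF assms(1,2)] by blast
        then show "U' a y = U a y" using eq[of x y] NN[of x] \<open>y \<in> {0..1}\<close> by auto
      qed
      then show False using diff NN by blast
    qed
    moreover have mo: "\<And>x y. x \<in> {0..1} \<Longrightarrow> y \<in> {0..1} \<Longrightarrow> x \<le> y \<Longrightarrow> U x e' \<le> U y e'"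
      using Um e'01 by blast
    moreover have f0: "U 0 e' = 0" using key[of 1] Nf N'f unfolding fuzzy_negation_def by auto
    moreover have f1: "U 1 e' = 1" using key[of 0] Nf N'f unfolding fuzzy_negation_def by auto
    moreover have "continuous_on {0..1} (\<lambda>x. U x e')"
    proof (rule mono_onto_cont[OF mo _ f0 f1])
      fix z :: real assume "z \<in> {0..1}"
      then obtain x where "x \<in> {0..1}" "N' x = z" using neg_onto[OF N'f N'c] by blast
      then show "\<exists>x\<in>{0..1}. U x e' = z" using key[of x] Nr[of x] by blast
    qed auto
    ultimately show "\<exists>\<alpha>\<in>{0<..<1}. \<alpha> \<noteq> e \<and>
       continuous_on {0..1} (\<lambda>x. U x \<alpha>) \<and> mono_on {0..1} (\<lambda>x. U x \<alpha>) \<and>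
       U 0 \<alpha> = 0 \<and> U 1 \<alpha> = 1"
      using e'(1) by (intro bexI[of _ e']) (auto intro!: mono_onI)
  next
    assume "\<exists>\<alpha>\<in>{0<..<1}. \<alpha> \<noteq> e \<and>
       continuous_on {0..1} (\<lambda>x. U x \<alpha>) \<and> mono_on {0..1} (\<lambda>x. U x \<alpha>) \<and>
       U 0 \<alpha> = 0 \<and> U 1 \<alpha> = 1"
    then obtain a where a: "a \<in> {0<..<1}" "a \<noteq> e" "continuous_on {0..1} (\<lambda>x. U x a)"
      "U 0 a = 0" "U 1 a = 1" by blast
    have a01: "a \<in> {0..1}" using a by auto
    obtain b where b: "b \<in> {0..1}" "U b a = e"
      using IVT'[of "\<lambda>x. U x a" 0 e 1] a(3,4,5) e01 by auto
    have ab: "U a b = e" using b Uc a01 by auto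
    have g1: "U 1 b = 1"
    proof -
      have "U 1 b = U (U 1 a) b" using a(5) by simp
      also have "\<dots> = U 1 (U a b)" using Ua a01 b by simp
      also have "\<dots> = 1" using ab Ue2 by simp
      finally show ?thesis .
    qed
    define U' where "U' x y = U (U x y) b" for x y
    define N' where "N' x = U (N x) a" for x
    have U'r: "\<And>x y. x \<in> {0..1} \<Longrightarrow> y \<in> {0..1} \<Longrightarrow> U' x y \<in> {0..1}"
      unfolding U'_def using Ur b by auto
    have un: "uninorm U' a"
      unfolding uninorm_def
    proof (intro conjI ballI impI)
      show "a \<in> {0..1}" by (fact a01)
      show "U' x y \<in> {0..1}" if "x \<in> {0..1}" "y \<in> {0..1}" for x y using U'r that by auto
      show "U' x y = U' y x" if "x \<in> {0..1}" "y \<in> {0..1}" for x y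
        unfolding U'_def using Uc that by auto
      show "U' x y \<le> U' x' y" if "x \<in> {0..1}" "x' \<in> {0..1}" "y \<in> {0..1}" "x \<le> x'" for x x' y
        unfolding U'_def using Um Ur that b by auto
      show "U' a x = x" if "x \<in> {0..1}" for x
      proof -
        have "U' a x = U (U x a) b" unfolding U'_def using Uc that a01 by auto
        also have "\<dots> = U x (U a b)" using Ua that a01 b by auto
        also have "\<dots> = x" using ab Ue2 that by auto
        finally show ?thesis .
      qed
      show "U' (U' x y) z = U' x (U' y z)" if "x \<in> {0..1}" "y \<in> {0..1}" "z \<in> {0..1}" for x y z
      proof -
        have r: "U x y \<in> {0..1}" "U y z \<in> {0..1}" "U (U x y) b \<in> {0..1}" "U (U y z) b \<in> {0..1}"
          "U z b \<in> {0..1}" "U b b \<in> {0..1}" "U y (U z b) \<in> {0..1}"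
          using Ur that b by auto
        have "U' (U' x y) z = U (U (U (U x y) b) z) b" unfolding U'_def ..
        also have "\<dots> = U (U (U x y) (U b z)) b" using Ua[of "U x y" b z] r that b by simp
        also have "\<dots> = U (U (U x y) (U z b)) b" using Uc[of b z] that b by simp
        also have "\<dots> = U (U x (U y (U z b))) b" using Ua[of x y "U z b"] r that b by simp
        also have "\<dots> = U x (U (U y (U z b)) b)" using Ua[of x "U y (U z b)" b] r that b by simp
        also have "\<dots> = U x (U (U (U y z) b) b)" using Ua[of y z b] r that b by simp
        also have "\<dots> = U (U x (U (U y z) b)) b" using Ua[of x "U (U y z) b" b] r that b by simp
        also have "\<dots> = U' x (U' y z)" unfolding U'_def ..
        finally show ?thesis .
      qed
    qed
    have dis: "disjunctive U'"
      unfolding disjunctive_def U'_def using assms(4) g1 unfolding disjunctive_def by simp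
    have mo: "mono_on {0..1} (\<lambda>x. U x a)" using Um a01 by (auto intro!: mono_onI)
    have N'f: "fuzzy_negation N'"
      unfolding fuzzy_negation_def N'_def
      using Nf Ur a01 a(4,5) Um Nr by auto
    have N'c: "continuous_on {0..1} N'"
      unfolding N'_def
      by (rule continuous_on_compose2[OF a(3) assms(2)]) (use Nr in auto)
    have "\<forall>x\<in>{0..1}. \<forall>y\<in>{0..1}. I x y = U' (N' x) y"
    proof (intro ballI)
      fix x y :: real assume xy: "x \<in> {0..1}" "y \<in> {0..1}"
      have n: "N x \<in> {0..1}" using Nr xy by auto
      have "U' (N' x) y = U (U (U (N x) a) y) b" unfolding U'_def N'_def ..
      also have "\<dots> = U (U (N x) (U a y)) b" using Ua n a01 xy by simp
      also have "\<dots> = U (U (N x) (U y a)) b" using Uc a01 xy by simp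
      also have "\<dots> = U (U (U (N x) y) a) b" using Ua n a01 xy by simp
      also have "\<dots> = U (U (N x) y) (U a b)" using Ua n a01 xy b Ur by simp
      also have "\<dots> = U (N x) y" using ab Ue2 Ur n xy by simp
      finally show "I x y = U' (N' x) y" using assms(6) xy by simp
    qed
    then have "UN_representation I U' N'"
      unfolding UN_representation_def using un dis N'f N'c a(1) by blast
    moreover have "U' a e \<noteq> U a e"
    proof -
      have "U' a e = e" using un e01 unfolding uninorm_def by blast
      moreover have "U a e = a" using Ue2 a01 by simp
      ultimately show ?thesis using a(2) by simp
    qed
    ultimately show "\<not> unique_UN_representation I U N"
      unfolding unique_UN_representation_def using a01 e01 by blast
  qed
qed

end
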